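(* Let $n\ge 2$ be even and let $m \ge \frac{5n}{2}-1$. Then the permutation $(1,n)(2n-1,2n)\in S_m$ is a product of $n$-crossing permutations over $S_m$.
   Context: For integers $2\le n\le m$ and $1 \le j \le m-n+1$, the $n$-crossing permutation $\pi_j\in S_m$ is $\pi_j=(j,\,j+n-1)(j+1,\,j+n-2)\cdots$, i.e. the involution sending $i \mapsto 2j+n-1-i$ for $j\le i\le j+n-1$ and fixing all other elements of $\{1,\dots,m\}$. The $n$-crossing permutations over $S_m$ are $\pi_1,\dots,\pi_{m-n+1}$. *)

theory Defs
  imports Complex_Main "HOL-Combinatorics.Transposition"
begin

text \<open>Permutations of {1..m} are represented as functions nat => nat fixing every
  point outside {1..m}.\<close>

definition crossing :: "nat \<Rightarrow> nat \<Rightarrow> nat \<Rightarrow> nat" where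
  "crossing n j i = (if j \<le> i \<and> i \<le> j + n - 1 then 2 * j + n - 1 - i else i)"

definition crossing_perms :: "nat \<Rightarrow> nat \<Rightarrow> (nat \<Rightarrow> nat) set" where
  "crossing_perms n m = {crossing n j | j. 1 \<le> j \<and> j \<le> m - n + 1}"

definition product_of_crossings :: "nat \<Rightarrow> nat \<Rightarrow> (nat \<Rightarrow> nat) \<Rightarrow> bool" where
  "product_of_crossings n m \<sigma> \<longleftrightarrow>
     (\<exists>ps. set ps \<subseteq> crossing_perms n m \<and> \<sigma> = foldr (\<circ>) ps id)"

end

theory Submission
  imports Defs
begin

lemma cr_in: "j \<le> i \<Longrightarrow> i \<le> j + n - 1 \<Longrightarrow> crossing n j i = 2*j+n-1-i"
  unfolding crossing_def by simp

lemma cr_out: "i < j \<or> i > j + n - 1 \<Longrightarrow> crossing n j i = i"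
  unfolding crossing_def by auto

lemma hval:
  assumes "n \<ge> 2"
  shows "crossing n n (crossing n 1 i) = (if i = 0 then 0 else if i = 1 then 2*n-1 else if i \<le> n then n+1-i
     else if i \<le> 2*n-1 then 3*n-1-i else i)"
proof -
  consider "i = 0" | "i = 1" | "2 \<le> i \<and> i \<le> n" | "n < i \<and> i \<le> 2*n-1" | "i > 2*n-1" by linarith
  then show ?thesis
  proof cases
    case 1 then show ?thesis using assms by (simp add: cr_out)
  next
    case 2
    have "crossing n 1 i = n" using 2 assms by (simp add: cr_in)
    moreover have "crossing n n n = 2*n-1" using assms by (simp add: cr_in)
    ultimately show ?thesis using 2 by simp
  next
    case 3
    have "crossing n 1 i = n+1-i" using 3 assms by (simp add: cr_in)
    moreover have "crossing n n (n+1-i) = n+1-i" using 3 assms by (subst cr_out) auto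
    ultimately show ?thesis using 3 by simp
  next
    case 4
    have "crossing n 1 i = i" using 4 assms by (subst cr_out) auto
    moreover have "crossing n n i = 3*n-1-i" using 4 assms by (subst cr_in) auto
    ultimately show ?thesis using 4 by simp
  next
    case 5
    have "crossing n 1 i = i" using 5 assms by (subst cr_out) auto
    moreover have "crossing n n i = i" using 5 assms by (subst cr_out) auto
    moreover have "i \<noteq> 0" "i \<noteq> 1" "\<not> i \<le> n" "\<not> i \<le> 2*n-1" using 5 assms by auto
    ultimately show ?thesis by simp
  qed
qed

lemma L1:
  assumes "n \<ge> 2"
  shows "crossing n n (crossing n 1 (crossing n n (crossing n 1 i))) =
    (if i = 1 then n else if i = n then 2*n-1 else if i = 2*n-1 then 1 else i)"
proof -
  note H = hval[OF assms]
  consider "i = 0" | "i = 1" | "2 \<le> i \<and> i < n" | "i = n" | "n < i \<and> i < 2*n-1" | "i = 2*n-1" | "i > 2*n-1" by linarith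
  then show ?thesis
  proof cases
    case 3
    have "n + 1 - i \<le> n" "n+1-i \<noteq> 1" "n+1-i \<noteq> 0" "n+1-(n+1-i) = i" "i \<noteq> 1" "i \<noteq> n" "i \<noteq> 2*n-1" "i \<noteq> 0" "i \<le> n" using 3 by auto
    then show ?thesis using 3 assms unfolding H by simp
  next
    case 5
    have "3*n-1-i > n" "3*n-1-i \<le> 2*n-1" "3*n-1-(3*n-1-i) = i" "i \<noteq> 1" "i \<noteq> n" "i \<noteq> 2*n-1" "i \<noteq> 0" "\<not> i \<le> n" "i \<le> 2*n-1" "3*n-1-i \<noteq> 0" "3*n-1-i \<noteq> 1" using 5 by auto
    then show ?thesis using 5 assms unfolding H by simp
  qed (use assms in \<open>unfold H, auto\<close>)
qed

lemma cinv: "crossing n j (crossing n j x) = x"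
  unfolding crossing_def by auto

lemma L2:
  assumes "n = 2*k" "k \<ge> 1"
  shows "crossing n n (crossing n (3*k) (
     (\<lambda>i. if i = 1 then n else if i = n then 2*n-1 else if i = 2*n-1 then 1 else i)
     (crossing n (3*k) (crossing n n i)))) =
    (if i = 1 then 2*n-1 else if i = 2*n-1 then 2*n else if i = 2*n then 1 else i)"
proof -
  define h where "h = (\<lambda>x. crossing n n (crossing n (3*k) x))"
  define y where "y = crossing n (3*k) (crossing n n i)"
  have iy: "i = h y" unfolding h_def y_def cinv ..
  have h1: "h 1 = 1" unfolding h_def crossing_def using assms by simp
  have h2: "h n = 2*n-1" unfolding h_def crossing_def using assms by simp
  have r1: "3*k \<le> 2*n-1 \<and> 2*n-1 \<le> 3*k+n-1" using assms by arith
  have r2: "2*(3*k)+n-1-(2*n-1) = 2*n" using assms by arith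
  have h3a: "crossing n (3*k) (2*n-1) = 2*n" unfolding crossing_def using r1 r2 by presburger
  have h3b: "crossing n n (2*n) = 2*n" unfolding crossing_def using assms by simp
  have h3: "h (2*n-1) = 2*n" unfolding h_def h3a h3b ..
  have ne: "2*n-1 \<noteq> 1" "n \<noteq> 1" "n \<noteq> 2*n-1" "2*n \<noteq> 1" "2*n \<noteq> 2*n-1" using assms by auto
  have hinj: "h a = h b \<Longrightarrow> a = b" for a b
    unfolding h_def by (metis cinv)
  have "h ((\<lambda>i. if i = 1 then n else if i = n then 2*n-1 else if i = 2*n-1 then 1 else i) y) =
    (if h y = 1 then 2*n-1 else if h y = 2*n-1 then 2*n else if h y = 2*n then 1 else h y)"
  proof (cases "y = 1")
    case True then show ?thesis using h1 h2 ne by simp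
  next
    case F1: False
    show ?thesis
    proof (cases "y = n")
      case True then show ?thesis using h1 h2 h3 ne F1 by simp
    next
      case F2: False
      show ?thesis
      proof (cases "y = 2*n-1")
        case True then show ?thesis using h1 h2 h3 ne F1 F2 by simp
      next
        case F3: False
        have "h y \<noteq> 1" "h y \<noteq> 2*n-1" "h y \<noteq> 2*n" using hinj h1 h2 h3 F1 F2 F3 by metis+
        then show ?thesis using F1 F2 F3 by simp
      qed
    qed
  qed
  then show ?thesis unfolding h_def y_def cinv .
qed

lemma L3:
  assumes "(n::nat) \<ge> 2"
  shows "(\<lambda>i. if i = 1 then n else if i = n then 2*n-1 else if i = 2*n-1 then 1 else i) (
    (\<lambda>i. if i = 1 then n else if i = n then 2*n-1 else if i = 2*n-1 then 1 else i) (
    (\<lambda>i. if i = 1 then 2*n-1 else if i = 2*n-1 then 2*n else if i = 2*n then 1 else i) i))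
    = transpose 1 n (transpose (2 * n - 1) (2 * n) i)"
proof -
  have ne: "2*n-1 \<noteq> 1" "n \<noteq> 1" "n \<noteq> 2*n-1" "2*n \<noteq> 1" "2*n \<noteq> 2*n-1" "n \<noteq> 2*n" using assms by auto
  consider "i = 1" | "i = n" | "i = 2*n-1" | "i = 2*n" | "i \<notin> {1, n, 2*n-1, 2*n}" by blast
  then show ?thesis
    by cases (use ne in \<open>simp_all add: transpose_def\<close>)
qed

theorem lemma2p7:
  fixes n m :: nat
  assumes "n \<ge> 2" and "even n" and "real m \<ge> 5 * real n / 2 - 1"
  shows "product_of_crossings n m (transpose 1 n \<circ> transpose (2 * n - 1) (2 * n))"
proof -
  obtain k where k: "n = 2*k" using assms(2) by blast
  have k1: "k \<ge> 1" using k assms(1) by simp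
  have mk0: "real m \<ge> 5 * real k - 1" using assms(3) k by simp
  have mk: "m + 1 \<ge> 5*k" using mk0 by linarith
  let ?a = "crossing n n" and ?b = "crossing n 1" and ?c = "crossing n (3*k)"
  define ps where "ps = [?a,?b,?a,?b,?a,?b,?a,?b,?a,?c,?a,?b,?a,?b,?c,?a]"
  have ar1: "1 \<le> n \<and> n \<le> m - n + 1" using k k1 mk by arith
  have ar2: "1 \<le> 3*k \<and> 3*k \<le> m - n + 1" using k k1 mk by arith
  have ma: "?a \<in> crossing_perms n m" unfolding crossing_perms_def
    using ar1 by (intro CollectI exI[of _ n] conjI refl) auto
  have mb: "?b \<in> crossing_perms n m" unfolding crossing_perms_def
    using ar1 by (intro CollectI exI[of _ 1] conjI refl) auto
  have mc: "?c \<in> crossing_perms n m" unfolding crossing_perms_def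
    using ar2 by (intro CollectI exI[of _ "3*k"] conjI refl) auto
  have h1: "set ps \<subseteq> crossing_perms n m"
    unfolding ps_def using ma mb mc by simp
  have h2: "foldr (\<circ>) ps id = transpose 1 n \<circ> transpose (2 * n - 1) (2 * n)"
  proof
    fix i
    have "foldr (\<circ>) ps id i = ?a (?b (?a (?b (?a (?b (?a (?b (?a (?c (?a (?b (?a (?b (?c (?a i)))))))))))))))"
      unfolding ps_def by simp
    also have "\<dots> = transpose 1 n (transpose (2 * n - 1) (2 * n) i)"
      by (simp only: L1[OF assms(1)] L2[OF k k1] L3[OF assms(1)])
    finally show "foldr (\<circ>) ps id i = (transpose 1 n \<circ> transpose (2 * n - 1) (2 * n)) i" by simp
  qed
  show ?thesis unfolding product_of_crossings_def
    by (rule exI[of _ ps]) (rule conjI[OF h1 h2[symmetric]])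
qed

end
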